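(* Let $(X,d)$ be a complete metric space and let $T:X\to X$ be a mapping. Let $f:[0,\infty)\to(0,\infty)$ be a Lebesgue integrable mapping which is summable (i.e. has finite integral on each compact subset of $[0,\infty)$) and such that $\int_0^{\varepsilon} f(t)\,dt>0$ for each $\varepsilon>0$. Let $\psi\in\Psi$, $\varphi\in\Phi_u$ and $F\in\mathcal{C}$. Suppose that there exists $\alpha\in(0,\tfrac12]$ such that for all $x,y\in X$, the inequality $\alpha\, d(x,Tx)\le d(x,y)$ implies $$\psi\Big(\int_0^{d(Tx,Ty)} f(t)\,dt\Big)\le F\Big(\psi\Big(\int_0^{d(x,y)} f(t)\,dt\Big),\ \varphi\Big(\int_0^{d(x,y)} f(t)\,dt\Big)\Big).$$ Then $T$ has a unique fixed point $a\in X$, and for each $x\in X$, $\lim_{n\to\infty}T^n x=a$.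
   Context: A $C$-class function is a continuous function $F:[0,\infty)^2\to\mathbb{R}$ such that for all $s,t\in[0,\infty)$: (1) $F(s,t)\le s$; (2) $F(s,t)=s$ implies $s=0$ or $t=0$. $\mathcal{C}$ denotes the class of all $C$-class functions. $\Phi_u$ denotes the class of functions $\varphi:[0,\infty)\to[0,\infty)$ that are continuous, satisfy $\varphi(t)>0$ for $t>0$, and $\varphi(0)\ge 0$. $\Psi$ denotes the set of functions $\psi:[0,\infty)\to[0,\infty)$ that are continuous and strictly increasing with $\psi(t)=0$ if and only if $t=0$. *)

theory Defs
  imports "HOL-Analysis.Analysis"
begin

definition C_class :: "(real \<Rightarrow> real \<Rightarrow> real) \<Rightarrow> bool" where
  "C_class F \<longleftrightarrow>
     continuous_on ({0..} \<times> {0..}) (\<lambda>(s,t). F s t) \<and>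
     (\<forall>s\<ge>0. \<forall>t\<ge>0. F s t \<le> s) \<and>
     (\<forall>s\<ge>0. \<forall>t\<ge>0. F s t = s \<longrightarrow> s = 0 \<or> t = 0)"

definition Phi_u :: "(real \<Rightarrow> real) \<Rightarrow> bool" where
  "Phi_u \<phi> \<longleftrightarrow>
     continuous_on {0..} \<phi> \<and> (\<forall>t\<ge>0. \<phi> t \<ge> 0) \<and>
     (\<forall>t>0. \<phi> t > 0) \<and> \<phi> 0 \<ge> 0"

definition Psi :: "(real \<Rightarrow> real) \<Rightarrow> bool" where
  "Psi \<psi> \<longleftrightarrow>
     continuous_on {0..} \<psi> \<and> (\<forall>t\<ge>0. \<psi> t \<ge> 0) \<and>
     strict_mono_on {0..} \<psi> \<and> (\<forall>t\<ge>0. \<psi> t = 0 \<longleftrightarrow> t = 0)"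

end

theory Submission
  imports Defs
begin

lemma abstract_fp:
  fixes T :: "'a::complete_space \<Rightarrow> 'a" and G h :: "real \<Rightarrow> real"
  assumes Gc: "\<And>b. continuous_on {0..b} G" and Gm: "\<And>a b. 0 \<le> a \<Longrightarrow> a < b \<Longrightarrow> G a < G b"
   and hc: "\<And>b. continuous_on {0..b} h" and hlt: "\<And>s. s > 0 \<Longrightarrow> h s < G s"
   and a0: "0 < \<alpha>" "\<alpha> \<le> 1/2"
   and c: "\<And>x y. \<alpha> * dist x (T x) \<le> dist x y \<Longrightarrow> G (dist (T x) (T y)) \<le> h (dist x y)"
  shows "\<exists>a. T a = a \<and> (\<forall>b. T b = b \<longrightarrow> b = a) \<and>
           (\<forall>x. (\<lambda>n. (T ^^ n) x) \<longlonglongrightarrow> a)"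
proof -
  have ne: "dist (T x) (T y) < dist x y" if "\<alpha> * dist x (T x) \<le> dist x y" "x \<noteq> y" for x y
  proof (rule ccontr)
    assume "\<not> ?thesis"
    hence "dist x y \<le> dist (T x) (T y)" by simp
    moreover have g: "G (dist (T x) (T y)) < G (dist x y)"
      using c[OF that(1)] hlt[of "dist x y"] that(2) by simp
    ultimately show False using Gm[of "dist x y" "dist (T x) (T y)"]
      by (cases "dist x y = dist (T x) (T y)") auto
  qed
  have ne': "dist (T x) (T y) \<le> dist x y" if "\<alpha> * dist x (T x) \<le> dist x y" for x y
    using ne[OF that] by (cases "x = y") auto
  have del: "\<exists>\<delta>>0. \<forall>x y. \<alpha> * dist x (T x) \<le> dist x y \<longrightarrow> \<epsilon> \<le> dist x y \<longrightarrow> dist x y \<le> 2*\<epsilon>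
              \<longrightarrow> dist (T x) (T y) \<le> dist x y - \<delta>" if ep: "\<epsilon> > 0" for \<epsilon>
  proof -
    have kc: "continuous_on {\<epsilon>..2*\<epsilon>} (\<lambda>s. G s - h s)"
      using continuous_on_subset[OF Gc[of "2*\<epsilon>"]] continuous_on_subset[OF hc[of "2*\<epsilon>"]] ep
      by (intro continuous_on_diff) auto
    obtain s0 where s0: "s0 \<in> {\<epsilon>..2*\<epsilon>}" "\<forall>s\<in>{\<epsilon>..2*\<epsilon>}. G s0 - h s0 \<le> G s - h s"
      using continuous_attains_inf[OF compact_Icc _ kc] ep by auto
    define k where "k = G s0 - h s0"
    have kpos: "k > 0" using hlt[of s0] s0 ep unfolding k_def by auto
    have "uniformly_continuous_on {0..2*\<epsilon>} G"
      by (rule compact_uniformly_continuous[OF Gc compact_Icc])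
    then obtain \<delta> where dp: "\<delta> > 0" and dG: "\<forall>x\<in>{0..2*\<epsilon>}. \<forall>x'\<in>{0..2*\<epsilon>}. dist x' x < \<delta> \<longrightarrow> dist (G x') (G x) < k"
      using kpos unfolding uniformly_continuous_on_def by metis
    show ?thesis
    proof (intro exI[of _ \<delta>] conjI allI impI dp)
      fix x y assume h1: "\<alpha> * dist x (T x) \<le> dist x y" and h2: "\<epsilon> \<le> dist x y" and h3: "dist x y \<le> 2*\<epsilon>"
      let ?s = "dist x y" and ?t = "dist (T x) (T y)"
      have ts: "?t \<le> ?s" using ne'[OF h1] .
      show "?t \<le> ?s - \<delta>"
      proof (rule ccontr)
        assume "\<not> ?thesis"
        hence "dist ?t ?s < \<delta>" using ts by (simp add: dist_real_def)
        hence "dist (G ?t) (G ?s) < k" using dG h3 ts by auto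
        moreover have "G ?t \<le> h ?s" using c[OF h1] .
        moreover have "k \<le> G ?s - h ?s" using s0 h2 h3 unfolding k_def by auto
        ultimately show False by (simp add: dist_real_def)
      qed
    qed
  qed
  have orbit: "\<exists>a. T a = a \<and> (\<lambda>n. (T ^^ n) x) \<longlonglongrightarrow> a" for x
  proof -
    define u where "u n = (T ^^ n) x" for n
    have uS: "u (Suc n) = T (u n)" for n unfolding u_def by simp
    define dn where "dn n = dist (u n) (u (Suc n))" for n
    have condn: "\<alpha> * dist (u n) (T (u n)) \<le> dist (u n) (T (u n))" for n
      using a0 by (intro mult_left_le_one_le) auto
    have dnS: "dn (Suc n) \<le> dn n" for n
      using ne'[OF condn[of n]] unfolding dn_def uS by simp
    have dec: "decseq dn" using dnS by (simp add: decseq_SucI)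
    obtain r where r: "dn \<longlonglongrightarrow> r" "\<forall>i. r \<le> dn i"
      using decseq_convergent[OF dec, of 0] unfolding dn_def by auto
    have r0: "r = 0"
    proof (rule ccontr)
      assume "r \<noteq> 0"
      moreover have "0 \<le> r" using LIMSEQ_le_const[OF r(1), of 0] unfolding dn_def by auto
      ultimately have rp: "r > 0" by simp
      obtain \<delta> where dp: "\<delta> > 0" and dd: "\<forall>x y. \<alpha> * dist x (T x) \<le> dist x y \<longrightarrow> r \<le> dist x y \<longrightarrow> dist x y \<le> 2*r
              \<longrightarrow> dist (T x) (T y) \<le> dist x y - \<delta>" using del[OF rp] by blast
      obtain N where N: "\<forall>n\<ge>N. dist (dn n) r < min \<delta> r" using r(1) dp rp
        unfolding lim_sequentially by (metis min_less_iff_conj)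
      have "dn N < r + min \<delta> r" using N by (auto simp: dist_real_def)
      hence "dn (Suc N) \<le> dn N - \<delta>" using dd[rule_format, OF condn[of N]] r(2)[rule_format, of N]
        unfolding dn_def uS by auto
      thus False using r(2)[rule_format, of "Suc N"] \<open>dn N < r + min \<delta> r\<close> by auto
    qed
    have dmono: "dn m \<le> dn n" if "n \<le> m" for m n using dec that by (simp add: decseq_def)
    have small: "\<exists>N. dn N < e" if "e > 0" for e
      using r(1) r0 that unfolding lim_sequentially dist_real_def
      by (metis abs_less_iff diff_zero le_refl)
    have cau: "Cauchy u"
      unfolding Cauchy_def
    proof (intro allI impI)
      fix e :: real assume ep: "e > 0"
      define \<epsilon> where "\<epsilon> = e/4"
      have epp: "\<epsilon> > 0" using ep unfolding \<epsilon>_def by simp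
      obtain \<delta> where dp: "\<delta> > 0" and dd: "\<forall>x y. \<alpha> * dist x (T x) \<le> dist x y \<longrightarrow> \<epsilon> \<le> dist x y \<longrightarrow> dist x y \<le> 2*\<epsilon>
              \<longrightarrow> dist (T x) (T y) \<le> dist x y - \<delta>" using del[OF epp] by blast
      obtain N where N: "dn N < min \<delta> \<epsilon>" using small[of "min \<delta> \<epsilon>"] dp epp by auto
      have key: "dist (u N) (u (N + k)) < 2*\<epsilon>" for k
      proof (induction k)
        case 0 then show ?case using epp by simp
      next
        case (Suc k)
        let ?D = "dist (u N) (u (N+k))"
        have tri: "dist (u N) (u (N + Suc k)) \<le> ?D + dn (N+k)"
          unfolding dn_def using dist_triangle by simp
        show ?case
        proof (cases "?D < \<epsilon>")
          case True
          have "dn (N+k) \<le> dn N" by (rule dmono) simp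
          then show ?thesis using tri True N by linarith
        next
          case False
          have cnd: "\<alpha> * dist (u N) (T (u N)) \<le> ?D"
          proof -
            have "\<alpha> * dist (u N) (T (u N)) \<le> dist (u N) (T (u N))" by (rule condn)
            also have "\<dots> = dn N" unfolding dn_def uS ..
            finally show ?thesis using N False by linarith
          qed
          have "dist (T (u N)) (T (u (N+k))) \<le> ?D - \<delta>"
            using dd[rule_format, OF cnd] False Suc.IH by linarith
          hence "dist (u (Suc N)) (u (N + Suc k)) \<le> ?D - \<delta>" by (simp add: uS)
          moreover have "dist (u N) (u (N + Suc k)) \<le> dn N + dist (u (Suc N)) (u (N + Suc k))"
            unfolding dn_def using dist_triangle by simp
          ultimately show ?thesis using N Suc.IH by linarith
        qed
      qed
      have "\<forall>m\<ge>N. dist (u N) (u m) < 2*\<epsilon>"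
        using key by (metis le_add_diff_inverse)
      hence "\<forall>m\<ge>N. \<forall>n\<ge>N. dist (u m) (u n) < e"
      proof (intro allI impI)
        fix m n assume H: "\<forall>m\<ge>N. dist (u N) (u m) < 2*\<epsilon>" "N \<le> m" "N \<le> n"
        have "dist (u m) (u n) \<le> dist (u N) (u m) + dist (u N) (u n)" by (rule dist_triangle3)
        moreover have "dist (u N) (u m) < 2*\<epsilon>" "dist (u N) (u n) < 2*\<epsilon>" using H by auto
        ultimately show "dist (u m) (u n) < e" unfolding \<epsilon>_def by linarith
      qed
      thus "\<exists>M. \<forall>m\<ge>M. \<forall>n\<ge>M. dist (u m) (u n) < e" by blast
    qed
    then obtain a where a: "u \<longlonglongrightarrow> a" using Cauchy_convergent convergent_def by blast
    have alt: "\<alpha> * dn n \<le> dist (u n) a \<or> \<alpha> * dn (Suc n) \<le> dist (u (Suc n)) a" for n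
    proof (rule ccontr)
      assume "\<not> ?thesis"
      hence h: "dist (u n) a < \<alpha> * dn n" "dist (u (Suc n)) a < \<alpha> * dn (Suc n)" by auto
      have "\<alpha> * dn (Suc n) \<le> \<alpha> * dn n" using dnS a0 by (simp add: mult_left_mono)
      moreover have "dn n \<le> dist (u n) a + dist (u (Suc n)) a"
        unfolding dn_def by (metis dist_commute dist_triangle)
      ultimately have "dn n < 2 * \<alpha> * dn n" using h by linarith
      moreover have d0: "0 \<le> dn n" unfolding dn_def by simp
      moreover have "2 * \<alpha> * dn n \<le> dn n" using a0 mult_left_le_one_le[OF d0, of "2*\<alpha>"] by simp
      ultimately show False by simp
    qed
    have step: "\<exists>k\<ge>n. dist (u (Suc k)) (T a) \<le> dist (u k) a" for n
    proof -
      have "\<alpha> * dist (u k) (T (u k)) \<le> dist (u k) a \<Longrightarrow> dist (u (Suc k)) (T a) \<le> dist (u k) a" for k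
        using ne' uS by metis
      hence hk: "\<alpha> * dn k \<le> dist (u k) a \<Longrightarrow> dist (u (Suc k)) (T a) \<le> dist (u k) a" for k
        unfolding dn_def uS by simp
      show ?thesis using alt[of n] hk[of n] hk[of "Suc n"] le_refl le_SucI by blast
    qed
    have "dist a (T a) = 0"
    proof (rule ccontr)
      assume "dist a (T a) \<noteq> 0"
      hence ep: "dist a (T a) > 0" by simp
      obtain N where N: "\<forall>n\<ge>N. dist (u n) a < dist a (T a) / 2"
        using a ep unfolding lim_sequentially by (meson half_gt_zero)
      obtain k where k: "k \<ge> N" "dist (u (Suc k)) (T a) \<le> dist (u k) a" using step by blast
      have "dist a (T a) \<le> dist (u (Suc k)) a + dist (u (Suc k)) (T a)"
        by (metis dist_commute dist_triangle)
      moreover have "dist (u (Suc k)) a < dist a (T a) / 2" using N k by simp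
      moreover have "dist (u k) a < dist a (T a) / 2" using N k by simp
      ultimately show False using k by linarith
    qed
    hence "T a = a" by simp
    thus ?thesis using a unfolding u_def by blast
  qed
  have uniq: "b = a" if "T a = a" "T b = b" for a b
  proof (rule ccontr)
    assume "b \<noteq> a"
    moreover have "\<alpha> * dist b (T b) \<le> dist b a" using that by simp
    ultimately have "dist (T b) (T a) < dist b a" using ne by blast
    thus False using that by simp
  qed
  obtain a where "T a = a" using orbit by blast
  show ?thesis
  proof (intro exI[of _ a] conjI allI impI)
    show "T a = a" by fact
    fix b assume "T b = b" thus "b = a" using uniq \<open>T a = a\<close> by blast
  next
    fix x obtain a' where "T a' = a'" "(\<lambda>n. (T ^^ n) x) \<longlonglongrightarrow> a'" using orbit by blast
    thus "(\<lambda>n. (T ^^ n) x) \<longlonglongrightarrow> a" using uniq \<open>T a = a\<close> by metis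
  qed
qed


theorem theorem3p1:
  fixes T :: "'a::complete_space \<Rightarrow> 'a"
    and f :: "real \<Rightarrow> real"
    and \<psi> \<phi> :: "real \<Rightarrow> real"
    and F :: "real \<Rightarrow> real \<Rightarrow> real"
  assumes f_pos: "\<forall>t\<ge>0. f t > 0"
    and f_int: "\<forall>e\<ge>0. set_integrable lborel {0..e} f"
    and f_int_pos: "\<forall>\<epsilon>>0. (LINT t:{0..\<epsilon>}|lborel. f t) > 0"
    and psi: "Psi \<psi>" and phi: "Phi_u \<phi>" and F: "C_class F"
    and contr: "\<exists>\<alpha>. 0 < \<alpha> \<and> \<alpha> \<le> 1/2 \<and>
       (\<forall>x y. \<alpha> * dist x (T x) \<le> dist x y \<longrightarrow>
          \<psi> (LINT t:{0..dist (T x) (T y)}|lborel. f t)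
            \<le> F (\<psi> (LINT t:{0..dist x y}|lborel. f t)) (\<phi> (LINT t:{0..dist x y}|lborel. f t)))"
  shows "\<exists>a. T a = a \<and> (\<forall>b. T b = b \<longrightarrow> b = a) \<and>
           (\<forall>x. (\<lambda>n. (T ^^ n) x) \<longlonglongrightarrow> a)"
proof -
  define I where "I s = (LINT t:{0..s}|lborel. f t)" for s
  obtain \<alpha> where a0: "0 < \<alpha>" "\<alpha> \<le> 1/2" and c0: "\<forall>x y. \<alpha> * dist x (T x) \<le> dist x y \<longrightarrow>
          \<psi> (I (dist (T x) (T y))) \<le> F (\<psi> (I (dist x y))) (\<phi> (I (dist x y)))"
    using contr unfolding I_def by blast
  have psic: "continuous_on {0..} \<psi>" and psi0: "\<And>t. t \<ge> 0 \<Longrightarrow> \<psi> t \<ge> 0"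
    and psim: "strict_mono_on {0..} \<psi>" and psiz: "\<And>t. t \<ge> 0 \<Longrightarrow> \<psi> t = 0 \<longleftrightarrow> t = 0"
    using psi unfolding Psi_def by auto
  have phic: "continuous_on {0..} \<phi>" and phi0: "\<And>t. t \<ge> 0 \<Longrightarrow> \<phi> t \<ge> 0"
    and phip: "\<And>t. t > 0 \<Longrightarrow> \<phi> t > 0"
    using phi unfolding Phi_u_def by auto
  have Fc: "continuous_on ({0..} \<times> {0..}) (\<lambda>(s,t). F s t)"
    and Fle: "\<And>s t. s \<ge> 0 \<Longrightarrow> t \<ge> 0 \<Longrightarrow> F s t \<le> s"
    and Feq: "\<And>s t. s \<ge> 0 \<Longrightarrow> t \<ge> 0 \<Longrightarrow> F s t = s \<Longrightarrow> s = 0 \<or> t = 0"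
    using F unfolding C_class_def by auto
  have Iint1: "f integrable_on {0..s}" if "s \<ge> 0" for s
    using set_borel_integral_eq_integral(1)[OF f_int[rule_format, OF that]] .
  have Iint2: "I s = integral {0..s} f" if "s \<ge> 0" for s
    unfolding I_def using set_borel_integral_eq_integral(2)[OF f_int[rule_format, OF that]] .
  note Iint = Iint1 Iint2
  have I0: "I s \<ge> 0" if "s \<ge> 0" for s
  proof -
    have "integral {0..s} f \<ge> 0"
      by (rule integral_nonneg[OF Iint1[OF that]]) (use f_pos in \<open>auto intro: less_imp_le\<close>)
    thus ?thesis using Iint2[OF that] by simp
  qed
  have Ic: "continuous_on {0..b} I" for b
  proof (cases "b \<ge> 0")
    case True
    have "continuous_on {0..b} (\<lambda>x. integral {0..x} f)"
      by (rule indefinite_integral_continuous_1[OF Iint(1)[OF True]])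
    then show ?thesis by (rule continuous_on_cong[THEN iffD1, rotated 2]) (auto simp: Iint)
  next
    case False then show ?thesis by simp
  qed
  have segpos: "(LINT t:{a..b}|lborel. f t) > 0" if "0 \<le> a" "a < b" for a b
  proof -
    have si: "set_integrable lborel {a..b} f"
      using set_integrable_subset[OF f_int[rule_format, of b]] that by auto
    have "(LINT t:{a..b}|lborel. f t) \<ge> 0"
      unfolding set_lebesgue_integral_def
      by (rule integral_nonneg_AE, rule AE_I2) (use that f_pos in \<open>auto simp: indicator_def intro: less_imp_le\<close>)
    moreover have "(LINT t:{a..b}|lborel. f t) \<noteq> 0"
    proof
      assume z: "(LINT t:{a..b}|lborel. f t) = 0"
      have "AE x in lborel. indicator {a..b} x * f x = 0"
      proof (subst integral_nonneg_eq_0_iff_AE[symmetric])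
        show "integrable lborel (\<lambda>x. indicator {a..b} x * f x)" using si by (simp add: set_integrable_def)
        show "AE x in lborel. 0 \<le> indicator {a..b} x * f x"
          by (rule AE_I2) (use that f_pos in \<open>auto simp: indicator_def intro: less_imp_le\<close>)
        show "integral\<^sup>L lborel (\<lambda>x. indicator {a..b} x * f x) = 0" using z by (simp add: set_lebesgue_integral_def)
      qed
      hence "AE x in lborel. x \<notin> {a..b}"
        proof eventually_elim
        fix x assume hx: "indicator {a..b} x * f x = 0"
        show "x \<notin> {a..b}"
        proof
          assume xi: "x \<in> {a..b}"
          hence "f x = 0" using hx by simp
          moreover have "f x > 0" using f_pos xi that by auto
          ultimately show False by simp
        qed
      qed
      hence "{a..b} \<in> null_sets lborel" by (subst AE_iff_null_sets) auto
      hence "emeasure lborel {a..b} = 0" by auto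
      thus False using that by simp
    qed
    ultimately show ?thesis by simp
  qed
  have Im: "I a < I b" if "0 \<le> a" "a < b" for a b
  proof -
    have ib: "f integrable_on {0..b}" using Iint1 that by simp
    have "integral {0..a} f + integral {a..b} f = integral {0..b} f"
      by (rule Henstock_Kurzweil_Integration.integral_combine) (use that ib in auto)
    moreover have "integral {a..b} f = (LINT t:{a..b}|lborel. f t)"
      using set_borel_integral_eq_integral(2)[OF set_integrable_subset[OF f_int[rule_format, of b]]] that
      by auto
    ultimately show ?thesis using segpos[OF that] Iint2[of a] Iint2[of b] that by simp
  qed
  show ?thesis
  proof (rule abstract_fp[of "\<lambda>s. \<psi> (I s)" "\<lambda>s. F (\<psi> (I s)) (\<phi> (I s))" \<alpha> T])
    show "continuous_on {0..b} (\<lambda>s. \<psi> (I s))" for b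
      by (rule continuous_on_compose2[OF psic Ic]) (auto simp: I0)
    show "continuous_on {0..b} (\<lambda>s. F (\<psi> (I s)) (\<phi> (I s)))" for b
    proof -
      have c1: "continuous_on {0..b} (\<lambda>s. (\<psi> (I s), \<phi> (I s)))"
        by (intro continuous_on_Pair continuous_on_compose2[OF psic Ic] continuous_on_compose2[OF phic Ic])
           (auto simp: I0)
      have "continuous_on {0..b} (\<lambda>s. (\<lambda>(s,t). F s t) (\<psi> (I s), \<phi> (I s)))"
        by (rule continuous_on_compose2[OF Fc c1]) (auto simp: I0 psi0 phi0)
      thus ?thesis by simp
    qed
    show "\<psi> (I a) < \<psi> (I b)" if "0 \<le> a" "a < b" for a b
      by (rule strict_mono_onD[OF psim]) (use I0 that Im[OF that] in auto)
    show "F (\<psi> (I s)) (\<phi> (I s)) < \<psi> (I s)" if "s > 0" for s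
    proof -
      have Ip: "I s > 0" using f_int_pos that unfolding I_def by auto
      have g0: "\<psi> (I s) > 0" using psi0[of "I s"] psiz[of "I s"] Ip by auto
      have p0: "\<phi> (I s) > 0" using phip Ip by auto
      have "F (\<psi> (I s)) (\<phi> (I s)) \<le> \<psi> (I s)" using Fle g0 p0 by auto
      moreover have "F (\<psi> (I s)) (\<phi> (I s)) \<noteq> \<psi> (I s)" using Feq[of "\<psi> (I s)" "\<phi> (I s)"] g0 p0 by auto
      ultimately show ?thesis by simp
    qed
    show "0 < \<alpha>" "\<alpha> \<le> 1/2" by fact+
    show "\<psi> (I (dist (T x) (T y))) \<le> F (\<psi> (I (dist x y))) (\<phi> (I (dist x y)))"
      if "\<alpha> * dist x (T x) \<le> dist x y" for x y using c0 that by blast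
  qed
qed

end
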